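(* Let $s\ge 3$ and $1\le i\le s-1$, and put $J=\lfloor (s-i+1)/2\rfloor$. Then for all $0\le j\le J$ we have $|\lambda_{i,j}|\le|\lambda_{i,J}|$, with equality if and only if either $j=J$, or $s$ is odd, $i=1$ and $j=0$.
   Context: $|\mu|$ denotes the size (sum of parts) of a partition $\mu$. For a finite set $\{h_1>h_2>\cdots>h_m\}$ of positive integers, the unique partition with this $\beta$-set (set of first-column hook lengths) is $(h_1-(m-1),h_2-(m-2),\ldots,h_m)$, of size $\sum_i h_i-\binom{m}{2}$. For $s\ge 3$, $1\le i\le s-1$, define $\beta_{i,0}=\bigcup_{k\ge 0}\{i+1+k(s+2),\ldots,(k+1)s-1\}$ (empty intervals omitted), and for $1\le j\le\lfloor(s-i+1)/2\rfloor$ define $\beta_{i,j}=\beta_{i,0}\cup\{i+p(s+2): 0\le p\le j-1\}$. Let $\lambda_{i,j}$ be the unique partition whose $\beta$-set is $\beta_{i,j}$. *)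

theory Defs
  imports Main
begin

text \<open>The partition with a given finite beta-set H of positive integers
  {h_1 > ... > h_m} is (h_1-(m-1), h_2-(m-2), ..., h_m), listed in weakly
  decreasing order.\<close>
definition partition_of_beta :: "nat set \<Rightarrow> nat list" where
  "partition_of_beta H =
     (let xs = sorted_list_of_set H
      in rev (map (\<lambda>k. xs ! k - k) [0..<length xs]))"

definition partition_size :: "nat list \<Rightarrow> nat" where
  "partition_size \<mu> = sum_list \<mu>"

definition beta0 :: "nat \<Rightarrow> nat \<Rightarrow> nat set" where
  "beta0 s i = (\<Union>k. {i + 1 + k * (s + 2) .. (k + 1) * s - 1})"

definition beta :: "nat \<Rightarrow> nat \<Rightarrow> nat \<Rightarrow> nat set" where
  "beta s i j = beta0 s i \<union> {i + p * (s + 2) | p. p < j}"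

definition lam :: "nat \<Rightarrow> nat \<Rightarrow> nat \<Rightarrow> nat list" where
  "lam s i j = partition_of_beta (beta s i j)"

end

theory Submission imports Defs begin

lemma gauss2: "2 * (\<Sum>k<n. k) = n * (n - 1::nat)"
proof (induction n)
  case (Suc n) then show ?case by (cases n) (auto simp: algebra_simps)
qed simp

lemma sumK: "2*K \<le> n+1 \<Longrightarrow> (\<Sum>k<K. n - 1 - 2*k) + K*K = K*(n::nat)"
proof (induction K)
  case (Suc K)
  then have "(\<Sum>k<K. n - 1 - 2*k) + K*K = K*n" by simp
  moreover have "n - 1 - 2*K + 2*K + 1 = n" using Suc.prems by simp
  ultimately show ?case by (simp add: algebra_simps)
qed simp

lemma beta0_eq:
  assumes "1 \<le> i" "i < s"
  shows "beta0 s i = (\<Union>k<(s-i) div 2. {i + 1 + k * (s + 2) .. (k + 1) * s - 1})"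
  unfolding beta0_def
proof (intro equalityI subsetI)
  fix x assume "x \<in> (\<Union>k. {i + 1 + k * (s + 2) .. (k + 1) * s - 1})"
  then obtain k where k: "i + 1 + k * (s + 2) \<le> x" "x \<le> (k + 1) * s - 1" by auto
  have "k < (s-i) div 2"
  proof (rule ccontr)
    assume "\<not> ?thesis"
    then have "s \<le> i + 2*k + 1" by linarith
    then have "(k+1)*s \<le> i + 1 + k*(s+2)" by (simp add: algebra_simps)
    with k show False by linarith
  qed
  with k show "x \<in> (\<Union>k<(s-i) div 2. {i + 1 + k * (s + 2) .. (k + 1) * s - 1})" by auto
qed auto

lemma card_beta0:
  assumes "1 \<le> i" "i < s"
  shows "finite (beta0 s i)" "card (beta0 s i) + ((s-i) div 2)^2 = ((s-i) div 2) * (s-i)"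
proof -
  define K where "K = (s-i) div 2"
  define I where "I = (\<lambda>k. {i + 1 + k * (s + 2) .. (k + 1) * s - 1})"
  have eq: "beta0 s i = (\<Union>k<K. I k)" using beta0_eq[OF assms] unfolding K_def I_def by simp
  show "finite (beta0 s i)" unfolding eq I_def by auto
  have disj: "\<forall>k\<in>{..<K}. \<forall>l\<in>{..<K}. k \<noteq> l \<longrightarrow> I k \<inter> I l = {}"
  proof (intro ballI impI)
    fix k l :: nat assume "k \<noteq> l"
    have *: "I k \<inter> I l = {}" if "k < l" for k l :: nat
    proof -
      have "(k+1)*s \<le> l*s" using that by (intro mult_le_mono1) simp
      then have "(k + 1) * s - 1 < i + 1 + l * (s + 2)" by (simp add: algebra_simps)
      then show ?thesis unfolding I_def by auto
    qed
    show "I k \<inter> I l = {}"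
      using \<open>k \<noteq> l\<close> *[of k l] *[of l k] by (cases "k < l") (auto simp: Int_commute)
  qed
  have ck: "card (I k) = s - i - 1 - 2*k" if "k < K" for k
  proof -
    have "2*k + 2 \<le> s - i" using that unfolding K_def by linarith
    then have "(k+1)*s = k*s + s" "s \<ge> i + 2 + 2*k" by (simp_all add: algebra_simps)
    then show ?thesis unfolding I_def by (simp add: algebra_simps)
  qed
  have "card (beta0 s i) = (\<Sum>k<K. card (I k))"
    unfolding eq by (rule card_UN_disjoint) (simp, simp add: I_def, use disj in blast)
  also have "\<dots> = (\<Sum>k<K. s - i - 1 - 2*k)" using ck by simp
  finally have "card (beta0 s i) = (\<Sum>k<K. (s - i) - 1 - 2*k)" by simp
  moreover have "2*K \<le> (s-i)+1" unfolding K_def by simp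
  ultimately show "card (beta0 s i) + ((s-i) div 2)^2 = ((s-i) div 2) * (s-i)"
    using sumK[of K "s-i"] unfolding K_def by (simp add: power2_eq_square)
qed

lemma idx_ge: "sorted_wrt (<) (xs::nat list) \<Longrightarrow> k < length xs \<Longrightarrow> k \<le> xs!k"
proof (induction k)
  case 0 then show ?case by simp
next
  case (Suc k)
  then have "xs!k < xs!Suc k" using sorted_wrt_nth_less by fastforce
  with Suc show ?case by simp
qed

lemma size_formula:
  assumes "finite H"
  shows "2 * partition_size (partition_of_beta H) + card H * (card H - 1) = 2 * \<Sum>H"
proof -
  define xs where "xs = sorted_list_of_set H"
  have sw: "sorted_wrt (<) xs" unfolding xs_def by (rule strict_sorted_list_of_set)
  have len: "length xs = card H" unfolding xs_def by simp
  have dist: "distinct xs" unfolding xs_def by simp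
  have st: "set xs = H" unfolding xs_def using assms by simp
  have ps: "partition_size (partition_of_beta H) = (\<Sum>k<length xs. xs!k - k)"
    unfolding partition_size_def partition_of_beta_def Let_def xs_def[symmetric]
    by (simp add: interv_sum_list_conv_sum_set_nat atLeast0LessThan)
  have "(\<Sum>k<length xs. xs!k - k) + (\<Sum>k<length xs. k) = (\<Sum>k<length xs. xs!k)"
    unfolding sum.distrib[symmetric] by (rule sum.cong) (auto simp: idx_ge[OF sw])
  moreover have "(\<Sum>k<length xs. xs!k) = \<Sum>H"
    using sum_list_sum_nth[of xs] distinct_sum_list_conv_Sum[OF dist] st
    by (simp add: atLeast0LessThan)
  ultimately show ?thesis using ps len gauss2[of "length xs"] by (metis add_mult_distrib2)
qed

lemma int_nn1: "int (n*(n-1)) = int n * (int n - 1)"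
  by (cases n) (auto simp: algebra_simps)

lemma X_notin:
  assumes "1 \<le> i"
  shows "i + p*(s+2) \<notin> beta0 s i"
proof
  assume "i + p*(s+2) \<in> beta0 s i"
  then obtain k where k: "i + 1 + k * (s + 2) \<le> i + p*(s+2)" "i + p*(s+2) \<le> (k + 1) * s - 1"
    unfolding beta0_def by auto
  show False
  proof (cases "k < p")
    case True
    then have "(k+1)*s \<le> p*s" by (intro mult_le_mono1) simp
    then show False using k(2) assms by (simp add: algebra_simps)
  next
    case False
    then have "p*(s+2) \<le> k*(s+2)" by (intro mult_le_mono1) simp
    then show False using k(1) by simp
  qed
qed

lemma beta_eq: "beta s i j = beta0 s i \<union> (\<lambda>p. i + p*(s+2)) ` {..<j}"
  by (auto simp: beta_def)

lemma F_formula: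
  assumes "1 \<le> i" "i < s"
  shows "2 * int (partition_size (lam s i j)) =
     2 * int (\<Sum>(beta0 s i)) + 2 * int j * int i + (int s + 2) * int j * (int j - 1)
     - (int (card (beta0 s i)) + int j) * (int (card (beta0 s i)) + int j - 1)"
proof -
  let ?X = "(\<lambda>p. i + p*(s+2))"
  have fin0: "finite (beta0 s i)" using card_beta0[OF assms] by simp
  have inj: "inj ?X"
  proof (rule injI)
    fix x y :: nat assume "i + x*(s+2) = i + y*(s+2)"
    then have "x*(s+2) = y*(s+2)" by (simp only: add_left_cancel)
    then show "x = y" by (simp only: mult_cancel2) simp
  qed
  have dj: "beta0 s i \<inter> ?X ` {..<j} = {}" using X_notin[OF assms(1)] by auto
  have fin: "finite (beta s i j)" using fin0 by (simp add: beta_eq)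
  have card: "card (beta s i j) = card (beta0 s i) + j"
    unfolding beta_eq using fin0 dj card_Un_disjoint card_image[OF inj_on_subset[OF inj]]
    by (simp add: card_Un_disjoint card_image[OF inj_on_subset[OF inj]])
  have sm: "\<Sum>(beta s i j) = \<Sum>(beta0 s i) + (\<Sum>p<j. i + p*(s+2))"
  proof -
    have r: "\<Sum>(?X ` {..<j}) = (\<Sum>p<j. ?X p)"
      by (subst sum.reindex[OF inj_on_subset[OF inj subset_UNIV]]) simp
    show ?thesis unfolding beta_eq using fin0 dj r by (simp add: sum.union_disjoint)
  qed
  have "(\<Sum>p<j. i + p*(s+2)) = j*i + (\<Sum>p<j. p)*(s+2)"
    by (simp add: sum.distrib sum_distrib_right)
  then have "2*(\<Sum>p<j. i + p*(s+2)) = 2*j*i + (2*(\<Sum>p<j. p))*(s+2)"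
    by (simp add: algebra_simps)
  then have s2: "2*(\<Sum>p<j. i + p*(s+2)) = 2*j*i + j*(j-1)*(s+2)"
    unfolding gauss2 .
  have sf: "2 * partition_size (lam s i j) + (card (beta0 s i) + j) * (card (beta0 s i) + j - 1)
      = 2 * \<Sum>(beta0 s i) + 2*j*i + j*(j-1)*(s+2)"
    using size_formula[OF fin] card sm s2 unfolding lam_def by (simp add: algebra_simps)
  have "int (2 * partition_size (lam s i j)) + int ((card (beta0 s i) + j) * (card (beta0 s i) + j - 1))
      = int (2 * \<Sum>(beta0 s i)) + int (2*j*i) + int (j*(j-1)*(s+2))" using sf
    by (metis of_nat_add)
  moreover have "int ((card (beta0 s i) + j) * (card (beta0 s i) + j - 1))
     = (int (card (beta0 s i)) + int j) * (int (card (beta0 s i)) + int j - 1)"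
    using int_nn1[of "card (beta0 s i) + j"] by simp
  moreover have "int (j*(j-1)*(s+2)) = int j * (int j - 1) * (int s + 2)"
    using int_nn1[of j] by (simp only: of_nat_mult) simp
  ultimately show ?thesis by (simp add: algebra_simps)
qed

theorem lemma3p3:
  fixes s i j :: nat
  assumes "s \<ge> 3" and "1 \<le> i" and "i \<le> s - 1"
    and "j \<le> (s - i + 1) div 2"
  shows "partition_size (lam s i j) \<le> partition_size (lam s i ((s - i + 1) div 2))
    \<and> (partition_size (lam s i j) = partition_size (lam s i ((s - i + 1) div 2))
         \<longleftrightarrow> (j = (s - i + 1) div 2 \<or> (odd s \<and> i = 1 \<and> j = 0)))"
proof -
  have hi: "1 \<le> i" "i < s" using assms by auto
  define J where "J = (s - i + 1) div 2"
  define K where "K = (s - i) div 2"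
  define c where "c = card (beta0 s i)"
  define S0 where "S0 = \<Sum>(beta0 s i)"
  have cK: "c + K^2 = K * (s - i)" using card_beta0(2)[OF hi] unfolding c_def K_def .
  have Fj: "2 * int (partition_size (lam s i j)) =
     2 * int S0 + 2 * int j * int i + (int s + 2) * int j * (int j - 1)
     - (int c + int j) * (int c + int j - 1)" using F_formula[OF hi] unfolding c_def S0_def .
  have FJ: "2 * int (partition_size (lam s i J)) =
     2 * int S0 + 2 * int J * int i + (int s + 2) * int J * (int J - 1)
     - (int c + int J) * (int c + int J - 1)" using F_formula[OF hi] unfolding c_def S0_def .
  have jJ: "j \<le> J" using assms(4) unfolding J_def .
  define D where "D = 2 * int (partition_size (lam s i J)) - 2 * int (partition_size (lam s i j))"
  have main: "D \<ge> 0 \<and> (D = 0 \<longleftrightarrow> (j = J \<or> (odd s \<and> i = 1 \<and> j = 0)))"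
  proof (cases "even (s - i)")
    case True
    then obtain n where n: "s - i = 2*n" by blast
    have K: "K = n" unfolding K_def n by simp
    have J: "J = n" unfolding J_def n by simp
    have s: "int s = int i + 2 * int n" using n hi by linarith
    have c: "int c = int n * int n" using cK unfolding K n by (simp add: power2_eq_square)
    have "D = (int n - int j) * ((int i + 2*int n + 1) * int j + (int i - 1) * (int n + 1))"
      using Fj FJ unfolding D_def J s c by (simp add: algebra_simps)
    moreover have "int j \<le> int n" using jJ J by simp
    moreover have "(int i + 2*int n + 1) * int j + (int i - 1) * (int n + 1) \<ge> 0"
      using hi by simp
    moreover have "(int i + 2*int n + 1) * int j + (int i - 1) * (int n + 1) = 0 \<longleftrightarrow> j = 0 \<and> i = 1"
    proof -
      have a: "(int i + 2*int n + 1) * int j \<ge> 0" "(int i - 1) * (int n + 1) \<ge> 0" using hi by simp_all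
      have "(int i + 2*int n + 1) * int j = 0 \<longleftrightarrow> j = 0" by simp
      moreover have "(int i - 1) * (int n + 1) = 0 \<longleftrightarrow> i = 1" using hi by simp
      ultimately show ?thesis using a by linarith
    qed
    moreover have "i = 1 \<Longrightarrow> odd s" using s by presburger
    ultimately show ?thesis using J by (auto simp: mult_nonneg_nonneg)
  next
    case False
    then obtain n where n: "s - i = 2*n + 1" by (metis oddE)
    have K: "K = n" unfolding K_def n by simp
    have J: "J = n + 1" unfolding J_def n by simp
    have s: "int s = int i + 2 * int n + 1" using n hi by linarith
    have c: "int c = int n * int n + int n" using cK unfolding K n by (simp add: power2_eq_square algebra_simps)
    have "D = (int n + 1 - int j) * ((int i + 2*int n + 2) * int j + 2 * int i + int i * int n)"
      using Fj FJ unfolding D_def J s c by (simp add: algebra_simps)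
    moreover have "int j \<le> int n + 1" using jJ J by simp
    moreover have "(int i + 2*int n + 2) * int j + 2 * int i + int i * int n > 0"
    proof -
      have "(int i + 2*int n + 2) * int j \<ge> 0" "int i * int n \<ge> 0" by simp_all
      then show ?thesis using hi by linarith
    qed
    moreover have "i = 1 \<Longrightarrow> even s" using s by presburger
    ultimately show ?thesis using J by (auto simp: mult_nonneg_nonneg)
  qed
  show ?thesis using main unfolding D_def J_def[symmetric] by auto
qed

end
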